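(* Let $\mathcal{T}$ be a $(\rho,M)$-tree. For all $t>\dim_{\mathrm{L}}\partial\mathcal{T}$ and $\ell\in\mathbb{N}$, there exist an integer $n\geq\ell$, $Q\in\mathcal{T}_n$, and an integer $k\geq n+\ell$ such that for all $j=0,\ldots,\ell$ and all $Q'\in\mathcal{T}^Q_j$, $$\frac{\#(Q'\cap\mathcal{T}^Q_{k-n})}{\#\mathcal{T}^Q_{k-n}}\geq\rho^{tj}.$$
   Context: Inner regular partition: for a non-empty compact $K\subset\mathbb{R}^d$ and $\rho\in(0,1)$, a family $\{(Q_{i,k},x_{i,k}):k\in\mathbb{N}\cup\{0\},\ i\in\mathcal{N}_k\}$ of non-empty Borel sets $Q_{i,k}$ with points $x_{i,k}\in K\cap Q_{i,k}$ such that, for constants $c,C>0$: (i) $\#\mathcal{N}_0=1$; (ii) for each $k$, $K$ is the disjoint union of the $Q_{i,k}$, $i\in\mathcal{N}_k$; (iii) sets of levels $k\leq m$ are either disjoint or the level-$m$ set is contained in the level-$k$ set; (iv) $B(x_{i,k},c\rho^k)\subset Q_{i,k}\subset B(x_{i,k},C\rho^k)$ (closed balls); (v) $\{x_{i,k}:i\in\mathcal{N}_k\}\subset\{x_{i,k+1}:i\in\mathcal{N}_{k+1}\}$. A $(\rho,M)$-tree is a set $\mathcal{T}$ of finite words over $\mathcal{A}=\{1,\ldots,M\}$ obtained from such a partition in which each set has at most $M$ children: the root set gets the empty word, and if the set labelled $\mathtt{a}$ has children $R_1,\ldots,R_j$ ($j\leq M$), $R_i$ is labelled $\mathtt{a}i$;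 $\mathcal{T}$ is the set of labels and $\mathcal{T}_n$ the labels of length $n$. Elements of $\mathcal{T}$ are identified with cylinders $[\mathtt{a}]=\{x\in\mathcal{A}^{\mathbb{N}}:x\text{ begins with }\mathtt{a}\}$; $\partial\mathcal{T}=\bigcap_n\bigcup_{\mathtt{a}\in\mathcal{T}_n}[\mathtt{a}]$. For $Q=[\mathtt{a}]$ with $\mathtt{a}\in\mathcal{T}$, the subtree is $\mathcal{T}^Q=\{\mathtt{b}:\mathtt{a}\mathtt{b}\in\mathcal{T}\}$ and $\mathcal{T}^Q_j$ its words of length $j$. For $Q'=[\mathtt{b}']$ with $\mathtt{b}'\in\mathcal{T}^Q_j$, $\#(Q'\cap\mathcal{T}^Q_m)$ is the number of $\mathtt{b}\in\mathcal{T}^Q_m$ with $[\mathtt{b}]\subset Q'$. The lower dimension of $\partial\mathcal{T}$ is $\dim_{\mathrm{L}}\partial\mathcal{T}=\sup\{s>0:\exists C>0\ \forall 0\leq m\leq k\ \forall\mathtt{a}\in\mathcal{T}_m,\ \#\{\mathtt{b}\in\mathcal{T}_k:[\mathtt{b}]\subset[\mathtt{a}]\}\geq C\rho^{(m-k)s}\}$. *)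

theory Defs
  imports "HOL-Analysis.Analysis"
begin

text \<open>Inner regular partition of a nonempty compact set K (level k, index i),
  with sets Q k i and centres x k i, index sets N k.  Balls are balls of the
  metric space K, i.e. intersected with K.\<close>
definition inner_regular_partition ::
  "real \<Rightarrow> 'a::euclidean_space set \<Rightarrow> (nat \<Rightarrow> 'i set) \<Rightarrow> (nat \<Rightarrow> 'i \<Rightarrow> 'a set)
     \<Rightarrow> (nat \<Rightarrow> 'i \<Rightarrow> 'a) \<Rightarrow> bool" where
  "inner_regular_partition \<rho> K N Q x \<longleftrightarrow>
     K \<noteq> {} \<and> compact K \<and> 0 < \<rho> \<and> \<rho> < 1 \<and>
     (\<exists>c C. 0 < c \<and> 0 < C \<and>
       card (N 0) = 1 \<and>
       (\<forall>k. \<forall>i\<in>N k. Q k i \<noteq> {} \<and> Q k i \<in> sets borel \<and> x k i \<in> K \<inter> Q k i) \<and>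
       (\<forall>k. K = (\<Union>i\<in>N k. Q k i) \<and>
            (\<forall>i\<in>N k. \<forall>j\<in>N k. i \<noteq> j \<longrightarrow> Q k i \<inter> Q k j = {})) \<and>
       (\<forall>k m. k \<le> m \<longrightarrow> (\<forall>i\<in>N k. \<forall>j\<in>N m. Q k i \<inter> Q m j = {} \<or> Q m j \<subseteq> Q k i)) \<and>
       (\<forall>k. \<forall>i\<in>N k. K \<inter> cball (x k i) (c * \<rho> ^ k) \<subseteq> Q k i \<and>
                      Q k i \<subseteq> K \<inter> cball (x k i) (C * \<rho> ^ k)) \<and>
       (\<forall>k. x k ` N k \<subseteq> x (Suc k) ` N (Suc k)))"

definition children :: "(nat \<Rightarrow> 'i set) \<Rightarrow> (nat \<Rightarrow> 'i \<Rightarrow> 'a set) \<Rightarrow> nat \<Rightarrow> 'i \<Rightarrow> 'i set" where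
  "children N Q n i = {i' \<in> N (Suc n). Q (Suc n) i' \<subseteq> Q n i}"

text \<open>T is the set of labels of a (rho,M)-tree obtained from the partition (N,Q),
  via the labelling lab (word \<mapsto> index of the labelled set): the root gets the
  empty word, and the j children of the set labelled a are labelled a@[1],...,a@[j]
  (in some order, given by lab), with j \<le> M.\<close>
definition tree_of_partition ::
  "nat \<Rightarrow> (nat \<Rightarrow> 'i set) \<Rightarrow> (nat \<Rightarrow> 'i \<Rightarrow> 'a set) \<Rightarrow> (nat list \<Rightarrow> 'i) \<Rightarrow> nat list set \<Rightarrow> bool" where
  "tree_of_partition M N Q lab T \<longleftrightarrow>
     [] \<in> T \<and> lab [] \<in> N 0 \<and>
     (\<forall>a m. a @ [m] \<in> T \<longrightarrow> a \<in> T) \<and>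
     (\<forall>a\<in>T. card (children N Q (length a) (lab a)) \<le> M \<and>
        {m. a @ [m] \<in> T} = {1..card (children N Q (length a) (lab a))} \<and>
        bij_betw (\<lambda>m. lab (a @ [m])) {m. a @ [m] \<in> T} (children N Q (length a) (lab a)))"

definition level :: "nat list set \<Rightarrow> nat \<Rightarrow> nat list set" where
  "level T n = {a \<in> T. length a = n}"

definition subtree :: "nat list set \<Rightarrow> nat list \<Rightarrow> nat list set" where
  "subtree T a = {b. a @ b \<in> T}"

definition cylinder :: "nat \<Rightarrow> nat list \<Rightarrow> (nat \<Rightarrow> nat) set" where
  "cylinder M a = {x. (\<forall>i. x i \<in> {1..M}) \<and> (\<forall>i<length a. x i = a ! i)}"

text \<open>\#(Q' \<inter> S): number of words b in S with [b] \<subseteq> [b'].\<close>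
definition count_in :: "nat \<Rightarrow> nat list \<Rightarrow> nat list set \<Rightarrow> nat" where
  "count_in M b' S = card {b \<in> S. cylinder M b \<subseteq> cylinder M b'}"

definition lower_dim_set :: "real \<Rightarrow> nat \<Rightarrow> nat list set \<Rightarrow> real set" where
  "lower_dim_set \<rho> M T = {s. s > 0 \<and> (\<exists>C>0. \<forall>m k. m \<le> k \<longrightarrow>
      (\<forall>a\<in>level T m. real (count_in M a (level T k)) \<ge> C * \<rho> powr ((real m - real k) * s)))}"

definition lower_dim :: "real \<Rightarrow> nat \<Rightarrow> nat list set \<Rightarrow> real" where
  "lower_dim \<rho> M T = (if lower_dim_set \<rho> M T = {} then 0 else Sup (lower_dim_set \<rho> M T))"

end

theory Submission
  imports Defs "HOL-Library.Sublist"
begin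

definition cnt :: "nat list set \<Rightarrow> nat list \<Rightarrow> nat \<Rightarrow> nat" where
  "cnt T a k = card {b \<in> T. length b = k \<and> prefix a b}"

lemma tree_prefix_closed:
  assumes "tree_of_partition M N Q lab T" "a @ b \<in> T" shows "a \<in> T"
  using assms(2)
proof (induction b rule: rev_induct)
  case Nil then show ?case by simp
next
  case (snoc m b)
  then have "(a @ b) @ [m] \<in> T" by simp
  then have "a @ b \<in> T" using assms(1) unfolding tree_of_partition_def by blast
  then show ?case using snoc by blast
qed

lemma tree_alph:
  assumes "tree_of_partition M N Q lab T" "a \<in> T" shows "set a \<subseteq> {1..M}"
  using assms(2)
proof (induction a rule: rev_induct)
  case Nil then show ?case by simp
next
  case (snoc m a)
  have aT: "a \<in> T" using snoc(2) assms(1) unfolding tree_of_partition_def by blast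
  have "m \<in> {m. a @ [m] \<in> T}" using snoc(2) by simp
  then have "m \<in> {1..card (children N Q (length a) (lab a))}"
    using aT assms(1) unfolding tree_of_partition_def by blast
  moreover have "card (children N Q (length a) (lab a)) \<le> M"
    using aT assms(1) unfolding tree_of_partition_def by blast
  ultimately show ?case using snoc(1)[OF aT] by auto
qed

lemma tree_lab:
  assumes "tree_of_partition M N Q lab T" "a \<in> T" shows "lab a \<in> N (length a)"
  using assms(2)
proof (induction a rule: rev_induct)
  case Nil then show ?case using assms(1) unfolding tree_of_partition_def by simp
next
  case (snoc m a)
  have aT: "a \<in> T" using snoc(2) assms(1) unfolding tree_of_partition_def by blast
  have "bij_betw (\<lambda>m. lab (a @ [m])) {m. a @ [m] \<in> T} (children N Q (length a) (lab a))"
    using aT assms(1) unfolding tree_of_partition_def by blast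
  then have "lab (a @ [m]) \<in> children N Q (length a) (lab a)"
    using snoc(2) bij_betwE by fastforce
  then show ?case unfolding children_def by simp
qed

lemma tree_child:
  assumes "inner_regular_partition \<rho> K N Q x" "tree_of_partition M N Q lab T" "a \<in> T"
  shows "a @ [1] \<in> T"
proof -
  let ?n = "length a" and ?i = "lab a"
  let ?ch = "children N Q ?n ?i"
  have iN: "?i \<in> N ?n" using tree_lab[OF assms(2,3)] .
  from assms(1) obtain c C where
    ne: "\<forall>k. \<forall>i\<in>N k. Q k i \<noteq> {}" and
    cov: "\<forall>k. K = (\<Union>i\<in>N k. Q k i)" and
    nest: "\<forall>k m. k \<le> m \<longrightarrow> (\<forall>i\<in>N k. \<forall>j\<in>N m. Q k i \<inter> Q m j = {} \<or> Q m j \<subseteq> Q k i)" and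
    sub: "\<forall>k. \<forall>i\<in>N k. Q k i \<subseteq> K \<inter> cball (x k i) (C * \<rho> ^ k)"
    unfolding inner_regular_partition_def by metis
  obtain p where p: "p \<in> Q ?n ?i" using ne iN by blast
  then have "p \<in> K" using sub iN by blast
  then obtain i' where i': "i' \<in> N (Suc ?n)" "p \<in> Q (Suc ?n) i'" using cov by blast
  then have "Q (Suc ?n) i' \<subseteq> Q ?n ?i" using nest iN p by (metis disjoint_iff le_SucI order_refl)
  then have "i' \<in> ?ch" unfolding children_def using i' by simp
  moreover have bij: "bij_betw (\<lambda>m. lab (a @ [m])) {m. a @ [m] \<in> T} ?ch"
    and eq: "{m. a @ [m] \<in> T} = {1..card ?ch}"
    using assms(2,3) unfolding tree_of_partition_def by blast+
  ultimately have "finite ?ch" "?ch \<noteq> {}"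
    using bij_betw_finite[OF bij] eq by auto
  then have "card ?ch \<ge> 1" by (simp add: Suc_le_eq card_gt_0_iff)
  then have "1 \<in> {m. a @ [m] \<in> T}" using eq by simp
  then show ?thesis by simp
qed

lemma cyl_prefix:
  assumes "set b \<subseteq> {1..M}" "length a \<le> length b"
  shows "cylinder M b \<subseteq> cylinder M a \<longleftrightarrow> prefix a b"
proof
  assume H: "cylinder M b \<subseteq> cylinder M a"
  show "prefix a b"
  proof (cases "b = []")
    case True then show ?thesis using assms(2) by simp
  next
    case False
    then have "b ! 0 \<in> {1..M}" using assms(1) by (meson nth_mem length_greater_0_conv subsetD)
    then have M1: "1 \<le> M" by simp
    define z where "z = (\<lambda>i. if i < length b then b ! i else 1)"
    have "z \<in> cylinder M b" unfolding cylinder_def z_def using assms(1) M1 nth_mem by fastforce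
    then have "z \<in> cylinder M a" using H by blast
    then have "\<forall>i<length a. a ! i = b ! i" unfolding cylinder_def z_def using assms(2) by auto
    then have "a = take (length a) b" using assms(2) by (intro nth_equalityI) auto
    then show ?thesis by (metis take_is_prefix)
  qed
next
  assume "prefix a b"
  then obtain r where r: "b = a @ r" by (auto simp: prefix_def)
  show "cylinder M b \<subseteq> cylinder M a"
    unfolding cylinder_def r by (auto simp: nth_append)
qed

lemma level_finite:
  assumes "tree_of_partition M N Q lab T" shows "finite {b \<in> T. length b = k \<and> P b}"
proof -
  have "{b \<in> T. length b = k \<and> P b} \<subseteq> {xs. set xs \<subseteq> {1..M} \<and> length xs = k}"
    using tree_alph[OF assms] by blast
  moreover have "finite {xs. set xs \<subseteq> {1..M} \<and> length xs = k}"
    by (rule finite_lists_length_eq) simp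
  ultimately show ?thesis by (rule finite_subset)
qed

lemma level_card:
  assumes "tree_of_partition M N Q lab T" shows "card (level T k) \<le> M ^ k"
proof -
  have "level T k \<subseteq> {xs. set xs \<subseteq> {1..M} \<and> length xs = k}"
    using tree_alph[OF assms] unfolding level_def by blast
  then have "card (level T k) \<le> card {xs. set xs \<subseteq> {1..M} \<and> length xs = k}"
    by (intro card_mono) (auto intro: finite_lists_length_eq)
  then show ?thesis by (simp add: card_lists_length_eq)
qed

lemma tree_extend:
  assumes "inner_regular_partition \<rho> K N Q x" "tree_of_partition M N Q lab T" "a \<in> T"
  shows "\<exists>c\<in>T. length c = length a + d \<and> prefix a c"
  using assms(3)
proof (induction d arbitrary: a)
  case 0 then show ?case by auto
next
  case (Suc d)
  have "a @ [1] \<in> T" using tree_child[OF assms(1,2) Suc.prems] .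
  from Suc.IH[OF this] obtain c where "c \<in> T" "length c = length a + Suc d" "prefix (a @ [1]) c"
    by auto
  then show ?case by (meson prefix_order.trans prefixI)
qed

lemma cnt_pos:
  assumes "inner_regular_partition \<rho> K N Q x" "tree_of_partition M N Q lab T" "a \<in> T"
    "length a \<le> k"
  shows "cnt T a k \<ge> 1"
proof -
  obtain c where "c\<in>T" "length c = k" "prefix a c"
    using tree_extend[OF assms(1-3), of "k - length a"] assms(4) by auto
  then have "{b \<in> T. length b = k \<and> prefix a b} \<noteq> {}" by blast
  then show ?thesis unfolding cnt_def using level_finite[OF assms(2)]
    by (simp add: Suc_le_eq card_gt_0_iff)
qed

lemma cnt_mono:
  assumes "tree_of_partition M N Q lab T" "prefix a a'"
  shows "cnt T a' k \<le> cnt T a k"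
  unfolding cnt_def using level_finite[OF assms(1)] assms(2)
  by (intro card_mono) (auto intro: prefix_order.trans)

lemma count_level:
  assumes "tree_of_partition M N Q lab T" "length a \<le> k"
  shows "count_in M a (level T k) = cnt T a k"
proof -
  have "{b \<in> level T k. cylinder M b \<subseteq> cylinder M a} = {b \<in> T. length b = k \<and> prefix a b}"
  proof (rule Collect_cong)
    fix b
    show "(b \<in> level T k \<and> cylinder M b \<subseteq> cylinder M a) = (b \<in> T \<and> length b = k \<and> prefix a b)"
    proof (cases "b \<in> T \<and> length b = k")
      case True
      then show ?thesis using cyl_prefix[OF tree_alph[OF assms(1)], of b a] assms(2)
        unfolding level_def by auto
    qed (auto simp: level_def)
  qed
  then show ?thesis unfolding count_in_def cnt_def by simp
qed

lemma count_sub: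
  assumes "tree_of_partition M N Q lab T" "length b' \<le> d"
  shows "count_in M b' (level (subtree T a) d) = cnt T (a @ b') (length a + d)"
proof -
  have "{b \<in> level (subtree T a) d. cylinder M b \<subseteq> cylinder M b'}
      = {b \<in> level (subtree T a) d. prefix b' b}"
  proof (rule Collect_cong)
    fix b
    show "(b \<in> level (subtree T a) d \<and> cylinder M b \<subseteq> cylinder M b') = (b \<in> level (subtree T a) d \<and> prefix b' b)"
    proof (cases "b \<in> level (subtree T a) d")
      case True
      then have "a @ b \<in> T" "length b = d" unfolding level_def subtree_def by auto
      then have "set b \<subseteq> {1..M}" using tree_alph[OF assms(1)] by fastforce
      then show ?thesis using cyl_prefix[of b M b'] assms(2) True \<open>length b = d\<close> by auto
    qed auto
  qed
  moreover have "(\<lambda>b. a @ b) ` {b \<in> level (subtree T a) d. prefix b' b}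
      = {b \<in> T. length b = length a + d \<and> prefix (a @ b') b}"
    unfolding level_def subtree_def
    by (auto simp: prefix_def image_iff)
  moreover have "inj_on (\<lambda>b. a @ b) X" for X by (simp add: inj_on_def)
  ultimately show ?thesis unfolding count_in_def cnt_def
    by (metis (no_types, lifting) card_image)
qed

lemma card_sub:
  assumes "tree_of_partition M N Q lab T"
  shows "card (level (subtree T a) d) = cnt T a (length a + d)"
proof -
  have "{b \<in> level (subtree T a) d. cylinder M b \<subseteq> cylinder M []} = level (subtree T a) d"
    unfolding cylinder_def by auto
  then show ?thesis using count_sub[OF assms, of "[]" d a] unfolding count_in_def by simp
qed

lemma ldset_bound:
  assumes "tree_of_partition M N Q lab T" "0 < \<rho>" "\<rho> < 1" "1 \<le> M"
    "s \<in> lower_dim_set \<rho> M T"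
  shows "s \<le> ln (real M) / (- ln \<rho>)"
proof (rule ccontr)
  assume nt: "\<not> s \<le> ln (real M) / (- ln \<rho>)"
  have lr: "ln \<rho> < 0" using assms(2,3) by simp
  from assms(5) obtain C where C: "C > 0" and
    H: "\<forall>m k. m \<le> k \<longrightarrow> (\<forall>a\<in>level T m. real (count_in M a (level T k)) \<ge> C * \<rho> powr ((real m - real k) * s))"
    unfolding lower_dim_set_def by blast
  have root: "[] \<in> level T 0" using assms(1) unfolding tree_of_partition_def level_def by simp
  define \<delta> where "\<delta> = s * (- ln \<rho>) - ln (real M)"
  have dpos: "\<delta> > 0" using nt lr unfolding \<delta>_def by (simp add: field_simps)
  have key: "ln C + real k * \<delta> \<le> 0" for k
  proof -
    have "C * \<rho> powr ((0 - real k) * s) \<le> real (count_in M [] (level T k))"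
      using H root by force
    also have "\<dots> \<le> real (card (level T k))"
      unfolding count_in_def using level_finite[OF assms(1), of k "\<lambda>_. True"]
      by (intro of_nat_mono card_mono) (auto simp: level_def)
    also have "\<dots> \<le> real M ^ k" using level_card[OF assms(1), of k]
      by (metis of_nat_le_iff of_nat_power)
    finally have *: "C * \<rho> powr ((0 - real k) * s) \<le> real M ^ k" .
    have pos: "C * \<rho> powr ((0 - real k) * s) > 0" using C assms(2) by simp
    have "ln (C * \<rho> powr ((0 - real k) * s)) \<le> ln (real M ^ k)"
      using * pos by (meson ln_le_cancel_iff order_less_le_trans)
    moreover have "ln (C * \<rho> powr ((0 - real k) * s)) = ln C - real k * s * ln \<rho>"
      using C assms(2) by (simp add: ln_mult ln_powr)
    moreover have "ln (real M ^ k) = real k * ln (real M)"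
      using assms(4) by (simp add: ln_realpow)
    ultimately show ?thesis unfolding \<delta>_def by (simp add: algebra_simps)
  qed
  obtain k :: nat where k: "real k > - ln C / \<delta>" using reals_Archimedean2 by blast
  then have "real k * \<delta> > - ln C" using dpos by (simp add: field_simps)
  then show False using key[of k] by simp
qed

lemma ldset_bdd:
  assumes "tree_of_partition M N Q lab T" "0 < \<rho>" "\<rho> < 1" "1 \<le> M"
  shows "bdd_above (lower_dim_set \<rho> M T)"
  using ldset_bound[OF assms] by (meson bdd_aboveI)

theorem corollary3p7:
  fixes \<rho> :: real and M :: nat and K :: "'a::euclidean_space set"
    and N :: "nat \<Rightarrow> 'i set" and Q :: "nat \<Rightarrow> 'i \<Rightarrow> 'a set" and x :: "nat \<Rightarrow> 'i \<Rightarrow> 'a"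
    and lab :: "nat list \<Rightarrow> 'i" and T :: "nat list set"
    and t :: real and l :: nat
  assumes "inner_regular_partition \<rho> K N Q x"
    and "tree_of_partition M N Q lab T"
    and "t > lower_dim \<rho> M T"
    and "l \<ge> 1"
  shows "\<exists>n\<ge>l. \<exists>a\<in>level T n. \<exists>k\<ge>n + l. \<forall>j\<le>l. \<forall>b'\<in>level (subtree T a) j.
           real (count_in M b' (level (subtree T a) (k - n)))
             / real (card (level (subtree T a) (k - n))) \<ge> \<rho> powr (t * real j)"
proof (rule ccontr)
  assume neg: "\<not> ?thesis"
  note irp = assms(1) and tree = assms(2)
  have r0: "0 < \<rho>" and r1: "\<rho> < 1" using irp unfolding inner_regular_partition_def by auto
  have rootT: "[] \<in> T" using tree unfolding tree_of_partition_def by simp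
  have "[] @ [1] \<in> T" using tree_child[OF irp tree rootT] .
  then have M1: "1 \<le> M" using tree_alph[OF tree] by fastforce
  have bdd: "bdd_above (lower_dim_set \<rho> M T)" using ldset_bdd[OF tree r0 r1 M1] .
  have ld0: "lower_dim \<rho> M T \<ge> 0"
  proof (cases "lower_dim_set \<rho> M T = {}")
    case False
    then obtain s where s: "s \<in> lower_dim_set \<rho> M T" by blast
    then have "s > 0" unfolding lower_dim_set_def by simp
    moreover have "s \<le> Sup (lower_dim_set \<rho> M T)" using cSup_upper[OF s bdd] .
    ultimately show ?thesis unfolding lower_dim_def using False by simp
  qed (simp add: lower_dim_def)
  have t0: "t > 0" using ld0 assms(3) by simp
  have H: "\<exists>b'. a @ b' \<in> T \<and> 1 \<le> length b' \<and> length b' \<le> l \<and>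
      real (cnt T (a @ b') k) < \<rho> powr (t * real (length b')) * real (cnt T a k)"
    if aT: "a \<in> T" and al: "l \<le> length a" and k: "length a + l \<le> k" for a k
  proof -
    let ?n = "length a"
    have "a \<in> level T ?n" using aT unfolding level_def by simp
    then obtain j b' where j: "j \<le> l" and b': "b' \<in> level (subtree T a) j" and
      lt: "real (count_in M b' (level (subtree T a) (k - ?n)))
             / real (card (level (subtree T a) (k - ?n))) < \<rho> powr (t * real j)"
      using neg al k by force
    have lb: "length b' = j" and abT: "a @ b' \<in> T" using b' unfolding level_def subtree_def by auto
    have e1: "count_in M b' (level (subtree T a) (k - ?n)) = cnt T (a @ b') k"
      using count_sub[OF tree, of b' "k - ?n" a] lb j k by simp
    have e2: "card (level (subtree T a) (k - ?n)) = cnt T a k"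
      using card_sub[OF tree, of a "k - ?n"] k by simp
    have cpos: "real (cnt T a k) > 0" using cnt_pos[OF irp tree aT, of k] k by simp
    have lt2: "real (cnt T (a @ b') k) < \<rho> powr (t * real j) * real (cnt T a k)"
      using lt cpos unfolding e1 e2 by (simp add: divide_less_eq)
    have "j \<noteq> 0"
    proof
      assume "j = 0"
      then have "b' = []" using lb by simp
      then show False using lt2 \<open>j = 0\<close> r0 by simp
    qed
    then have "1 \<le> length b'" using lb by simp
    then show ?thesis using lt2 lb j abT by blast
  qed
  define f where "f m = \<rho> powr (t * real (l + (l - m)))" for m
  have claim: "\<forall>a\<in>T. real (cnt T a (length a + d)) \<ge> f (length a) * \<rho> powr (- t * real d)" for d
  proof (induction d rule: less_induct)
    case (less d)
    show ?case
    proof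
      fix a assume aT: "a \<in> T"
      let ?m = "length a"
      have c1: "real (cnt T a (?m + d)) \<ge> 1" using cnt_pos[OF irp tree aT, of "?m + d"] by simp
      show "real (cnt T a (?m + d)) \<ge> f ?m * \<rho> powr (- t * real d)"
      proof (cases "?m < l")
        case True
        show ?thesis
        proof (cases d)
          case 0
          have "f ?m \<le> 1" unfolding f_def using t0 r0 r1 by (intro powr_le1) auto
          then show ?thesis using c1 0 by simp
        next
          case (Suc d')
          have a1: "a @ [1] \<in> T" using tree_child[OF irp tree aT] .
          have "real (cnt T (a @ [1]) (length (a @ [1]) + d')) \<ge> f (length (a @ [1])) * \<rho> powr (- t * real d')"
            using less.IH[of d'] Suc a1 by blast
          moreover have "cnt T (a @ [1]) (?m + d) \<le> cnt T a (?m + d)"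
            using cnt_mono[OF tree] by simp
          moreover have "f (length (a @ [1])) * \<rho> powr (- t * real d') = f ?m * \<rho> powr (- t * real d)"
          proof -
            have "real (l + (l - Suc ?m)) = real (l + (l - ?m)) - 1" using True by simp
            then have "f (length (a @ [1])) = \<rho> powr (t * (real (l + (l - ?m)) - 1))"
              unfolding f_def by (metis length_append_singleton)
            then have "f (length (a @ [1])) * \<rho> powr (- t * real d') =
                \<rho> powr (t * (real (l + (l - ?m)) - 1) + (- t * real d'))"
              by (simp only: powr_add)
            also have "\<dots> = \<rho> powr (t * real (l + (l - ?m)) + (- t * real d))"
              using Suc by (simp add: algebra_simps)
            also have "\<dots> = f ?m * \<rho> powr (- t * real d)"
              unfolding f_def by (simp only: powr_add)
            finally show ?thesis .
          qed
          ultimately show ?thesis using Suc by simp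
        qed
      next
        case False
        then have fm: "f ?m = \<rho> powr (t * real l)" unfolding f_def by simp
        show ?thesis
        proof (cases "d < l")
          case True
          have "f ?m * \<rho> powr (- t * real d) = \<rho> powr (t * (real l - real d))"
            unfolding fm by (simp add: powr_add[symmetric] algebra_simps)
          also have "\<dots> \<le> 1" using t0 r0 r1 True by (intro powr_le1) auto
          finally show ?thesis using c1 by simp
        next
          case False
          obtain b' where abT: "a @ b' \<in> T" and j1: "1 \<le> length b'" and jl: "length b' \<le> l"
            and lt: "real (cnt T (a @ b') (?m + d)) < \<rho> powr (t * real (length b')) * real (cnt T a (?m + d))"
            using H[OF aT, of "?m + d"] \<open>\<not> ?m < l\<close> False by auto
          let ?j = "length b'"
          have "real (cnt T (a @ b') (length (a @ b') + (d - ?j))) \<ge> f (length (a @ b')) * \<rho> powr (- t * real (d - ?j))"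
          proof -
            have "d - ?j < d" using j1 jl False by simp
            then show ?thesis using less.IH[of "d - ?j"] abT by blast
          qed
          moreover have "length (a @ b') + (d - ?j) = ?m + d" using jl False by simp
          moreover have "f (length (a @ b')) = \<rho> powr (t * real l)" using \<open>\<not> ?m < l\<close>
            unfolding f_def by simp
          ultimately have ge: "real (cnt T (a @ b') (?m + d)) \<ge> \<rho> powr (t * real l) * \<rho> powr (- t * real (d - ?j))"
            by simp
          have "\<rho> powr (t * real ?j) * (f ?m * \<rho> powr (- t * real d))
              = \<rho> powr (t * real l) * \<rho> powr (- t * real (d - ?j))"
            unfolding fm using jl False by (simp add: powr_add[symmetric] algebra_simps of_nat_diff)
          then have "\<rho> powr (t * real ?j) * (f ?m * \<rho> powr (- t * real d))
              < \<rho> powr (t * real ?j) * real (cnt T a (?m + d))"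
            using ge lt by simp
          then show ?thesis using r0 by simp
        qed
      qed
    qed
  qed
  have tin: "t \<in> lower_dim_set \<rho> M T"
    unfolding lower_dim_set_def
  proof (intro CollectI conjI exI[of _ "\<rho> powr (t * real (2 * l))"] allI impI ballI)
    show "0 < t" by fact
    show "0 < \<rho> powr (t * real (2 * l))" using r0 by simp
    fix m k a assume mk: "m \<le> k" and a: "a \<in> level T m"
    have aT: "a \<in> T" and am: "length a = m" using a unfolding level_def by auto
    have "real (count_in M a (level T k)) = real (cnt T a (m + (k - m)))"
      using count_level[OF tree, of a k] am mk by simp
    also have "\<dots> \<ge> f m * \<rho> powr (- t * real (k - m))" using claim[of "k - m"] aT am by auto
    finally have ge: "real (count_in M a (level T k)) \<ge> f m * \<rho> powr (- t * real (k - m))" .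
    have "\<rho> powr (t * real (2 * l)) \<le> f m"
      unfolding f_def using t0 r0 r1 by (intro powr_mono') auto
    moreover have "\<rho> powr (- t * real (k - m)) = \<rho> powr ((real m - real k) * t)"
      using mk by (simp add: of_nat_diff algebra_simps)
    ultimately show "\<rho> powr (t * real (2 * l)) * \<rho> powr ((real m - real k) * t) \<le> real (count_in M a (level T k))"
      using ge r0 by (smt (verit) mult_right_mono powr_ge_zero)
  qed
  then have "lower_dim_set \<rho> M T \<noteq> {}" by blast
  then have "t \<le> lower_dim \<rho> M T" unfolding lower_dim_def using cSup_upper[OF tin bdd] by simp
  then show False using assms(3) by simp
qed

end
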